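(* If the optimum $\widehat{\boldsymbol \theta}$ in (S1) exists then it is unique, and the optimum $\check{\boldsymbol \mu}$ in (S2) exists and is unique too.
   Context: Let $\mathcal{E}$ be a minimally represented regular exponential family with densities $\exp\{\langle\boldsymbol\theta,\boldsymbol t(\boldsymbol x)\rangle-A(\boldsymbol\theta)\}$, open canonical parameter space $\Theta$, mean parameter space $M$ (with $\boldsymbol\mu=\nabla A(\boldsymbol\theta)$), sufficient statistic split as $\boldsymbol t=(\boldsymbol u,\boldsymbol v)$ and mixed parametrization $(\boldsymbol\mu_u,\boldsymbol\theta_v)\in M_u\times\Theta_v$. Let $M_u'\subseteq M_u$, $\Theta_v'\subseteq\Theta_v$ be convex and relatively closed, and $C_u=\{\boldsymbol\mu\in M:\boldsymbol\mu_u\in M_u'\}$, $C_v=\{\boldsymbol\theta\in\Theta:\boldsymbol\theta_v\in\Theta_v'\}$. Let $A^*$ be the Fenchel conjugate of $A$ and $\boldsymbol K(\boldsymbol\mu_1,\boldsymbol\theta_2)=-\langle\boldsymbol\mu_1,\boldsymbol\theta_2\rangle+A^*(\boldsymbol\mu_1)+A(\boldsymbol\theta_2)$ the Kullback–Leibler divergence, strictly convex in each argument. For the data average sufficient statistic $\boldsymbol t$ (in the closure of $M$): step (S1) minimizes $\boldsymbol K(\boldsymbol t,\boldsymbol\theta)$ over $\boldsymbol\theta\in C_v$, with optimum $\widehat{\boldsymbol\theta}$; step (S2) minimizes $\boldsymbol K(\boldsymbol\mu,\widehat{\boldsymbol\theta})$ over $\boldsymbol\mu\in C_u$, with optimum $\check{\boldsymbol\mu}$.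 *)

theory Defs
  imports "HOL-Probability.Probability"
begin

text \<open>Exponential family with base measure nu on a sample space 'x and sufficient
statistic T with values in a Euclidean space 'p; densities exp(<theta, T x> - A theta)
with respect to nu.\<close>

definition nat_param_space :: "'x measure \<Rightarrow> ('x \<Rightarrow> 'p::euclidean_space) \<Rightarrow> 'p set" where
  "nat_param_space \<nu> T = {\<theta>. integrable \<nu> (\<lambda>x. exp (\<theta> \<bullet> T x))}"

definition log_partition :: "'x measure \<Rightarrow> ('x \<Rightarrow> 'p::euclidean_space) \<Rightarrow> 'p \<Rightarrow> real" where
  "log_partition \<nu> T \<theta> = ln (\<integral>x. exp (\<theta> \<bullet> T x) \<partial>\<nu>)"

definition regular_minimal_expfam :: "'x measure \<Rightarrow> ('x \<Rightarrow> 'p::euclidean_space) \<Rightarrow> bool" where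
  "regular_minimal_expfam \<nu> T \<longleftrightarrow>
     T \<in> borel_measurable \<nu> \<and>
     open (nat_param_space \<nu> T) \<and> nat_param_space \<nu> T \<noteq> {} \<and>
     (\<forall>a c. (AE x in \<nu>. a \<bullet> T x = c) \<longrightarrow> a = 0)"

definition mean_param_space :: "'x measure \<Rightarrow> ('x \<Rightarrow> 'p::euclidean_space) \<Rightarrow> 'p set" where
  "mean_param_space \<nu> T =
     {\<mu>. \<exists>\<theta>\<in>nat_param_space \<nu> T.
           (log_partition \<nu> T has_derivative (\<lambda>h. \<mu> \<bullet> h)) (at \<theta>)}"

text \<open>Fenchel conjugate of A (A taken as +infinity outside Theta).\<close>
definition fenchel_conj :: "'x measure \<Rightarrow> ('x \<Rightarrow> 'p::euclidean_space) \<Rightarrow> 'p \<Rightarrow> ereal" where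
  "fenchel_conj \<nu> T \<mu> = (SUP \<theta>\<in>nat_param_space \<nu> T. ereal (\<mu> \<bullet> \<theta> - log_partition \<nu> T \<theta>))"

definition KL :: "'x measure \<Rightarrow> ('x \<Rightarrow> 'p::euclidean_space) \<Rightarrow> 'p \<Rightarrow> 'p \<Rightarrow> ereal" where
  "KL \<nu> T \<mu> \<theta> = ereal (- (\<mu> \<bullet> \<theta>)) + fenchel_conj \<nu> T \<mu> + ereal (log_partition \<nu> T \<theta>)"

definition C_u :: "'x measure \<Rightarrow> ('x \<Rightarrow> 'a::euclidean_space \<times> 'b::euclidean_space) \<Rightarrow> 'a set \<Rightarrow> ('a \<times> 'b) set" where
  "C_u \<nu> T Mu' = {\<mu> \<in> mean_param_space \<nu> T. fst \<mu> \<in> Mu'}"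

definition C_v :: "'x measure \<Rightarrow> ('x \<Rightarrow> 'a::euclidean_space \<times> 'b::euclidean_space) \<Rightarrow> 'b set \<Rightarrow> ('a \<times> 'b) set" where
  "C_v \<nu> T Thv' = {\<theta> \<in> nat_param_space \<nu> T. snd \<theta> \<in> Thv'}"

text \<open>Since A*(t) does not
depend on theta' (and may be +infinity for t on the boundary of M), the objective is taken
as K(t,theta') - A*(t) = A(theta') - <t,theta'>.\<close>
definition S1_opt :: "'x measure \<Rightarrow> ('x \<Rightarrow> 'a::euclidean_space \<times> 'b::euclidean_space) \<Rightarrow> 'b set \<Rightarrow> ('a \<times> 'b) \<Rightarrow> ('a \<times> 'b) \<Rightarrow> bool" where
  "S1_opt \<nu> T Thv' t \<theta> \<longleftrightarrow> \<theta> \<in> C_v \<nu> T Thv' \<and>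
     (\<forall>\<theta>'\<in>C_v \<nu> T Thv'. log_partition \<nu> T \<theta> - t \<bullet> \<theta> \<le> log_partition \<nu> T \<theta>' - t \<bullet> \<theta>')"

definition S2_opt :: "'x measure \<Rightarrow> ('x \<Rightarrow> 'a::euclidean_space \<times> 'b::euclidean_space) \<Rightarrow> 'a set \<Rightarrow> ('a \<times> 'b) \<Rightarrow> ('a \<times> 'b) \<Rightarrow> bool" where
  "S2_opt \<nu> T Mu' \<theta>h \<mu> \<longleftrightarrow> \<mu> \<in> C_u \<nu> T Mu' \<and>
     (\<forall>\<mu>'\<in>C_u \<nu> T Mu'. KL \<nu> T \<mu> \<theta>h \<le> KL \<nu> T \<mu>' \<theta>h)"

end

theory Submission
  imports Defs
begin


lemma exp_quad: "exp (y::real) \<le> 1 + y + y^2 * exp \<bar>y\<bar>"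
proof -
  obtain t where t: "\<bar>t\<bar> \<le> \<bar>y\<bar>" "exp y = (\<Sum>m<2. y ^ m / fact m) + exp t / fact 2 * y ^ 2"
    using Maclaurin_exp_le[of y 2] by blast
  have s2: "(\<Sum>m<2. y ^ m / fact m) = 1 + y" by (simp add: eval_nat_numeral)
  have f2: "(fact 2 :: real) = 2" by (simp add: eval_nat_numeral)
  have "exp t \<le> exp \<bar>y\<bar>" using t(1) by simp
  then have "exp t / 2 \<le> exp \<bar>y\<bar>" using exp_gt_zero[of t] by linarith
  then have "exp t / 2 * y ^ 2 \<le> exp \<bar>y\<bar> * y^2" by (rule mult_right_mono) simp
  moreover have "exp \<bar>y\<bar> * y^2 = y^2 * exp \<bar>y\<bar>" by (rule mult.commute)
  moreover have "exp y = 1 + y + exp t / 2 * y^2" using t(2) s2 f2 by simp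
  ultimately show ?thesis by linarith
qed

lemma sq_exp:
  assumes "0 \<le> (s::real)" "0 < d"
  shows "s^2 * exp (d * s) \<le> (2 / d^2) * exp (2 * d * s)"
proof -
  have "(d * s)^2 / 2 \<le> exp (d * s)"
  proof -
    have "0 \<le> d * s" using assms by simp
    from exp_lower_Taylor_quadratic[OF this] this show ?thesis by linarith
  qed
  then have h: "d^2 * s^2 \<le> 2 * exp (d * s)" by (simp add: power_mult_distrib)
  have d2: "0 < d^2" using assms by simp
  have "s^2 \<le> 2 * exp (d * s) / d^2"
    using h d2 by (subst pos_le_divide_eq) (auto simp: mult.commute)
  then have "s^2 \<le> (2 / d^2) * exp (d * s)" by simp
  then have "s^2 * exp (d * s) \<le> ((2 / d^2) * exp (d * s)) * exp (d * s)"
    using mult_right_mono[OF _ exp_ge_zero] by blast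
  also have "\<dots> = (2 / d^2) * exp (2 * d * s)"
    by (simp add: mult.assoc flip: exp_add)
  finally show ?thesis .
qed

lemma le_1_sq: "0 \<le> (r::real) \<Longrightarrow> r \<le> 1 + r^2"
proof -
  assume r: "0 \<le> r"
  have "0 \<le> (r - 1)^2" by simp
  then have "0 \<le> r * r - 2 * r + 1" by (simp add: power2_eq_square algebra_simps)
  then show ?thesis using r by (simp add: power2_eq_square)
qed

lemma exp_abs_le: "exp (k * \<bar>y\<bar>) \<le> exp (k * y) + exp (- k * y)" for k y :: real
proof (cases "0 \<le> y")
  case True
  then show ?thesis using exp_gt_zero[of "- k * y"] by simp
next
  case False
  then have "k * \<bar>y\<bar> = - k * y" by simp
  then show ?thesis using exp_gt_zero[of "k * y"] by simp
qed

lemma exp_norm_bound: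
  fixes v :: "'p::euclidean_space"
  assumes c: "0 \<le> c"
  shows "exp (c * norm v) \<le> (\<Sum>i\<in>Basis. exp ((c * DIM('p)) * (v \<bullet> i)) + exp (- (c * DIM('p)) * (v \<bullet> i)))"
    (is "_ \<le> ?R")
proof -
  define F where "F = (\<lambda>i. \<bar>v \<bullet> i\<bar>) ` (Basis :: 'p set)"
  have "finite F" "F \<noteq> {}" by (auto simp: F_def)
  then have "Max F \<in> F" by (rule Max_in)
  then obtain i0 where i0: "i0 \<in> Basis" "Max F = \<bar>v \<bullet> i0\<bar>" by (metis F_def imageE)
  have le: "\<bar>v \<bullet> i\<bar> \<le> \<bar>v \<bullet> i0\<bar>" if "i \<in> Basis" for i
  proof -
    have "\<bar>v \<bullet> i\<bar> \<le> Max F" using Max_ge[OF \<open>finite F\<close>, of "\<bar>v \<bullet> i\<bar>"] that by (simp add: F_def)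
    with i0(2) show ?thesis by simp
  qed
  have "norm v \<le> (\<Sum>i\<in>Basis. \<bar>v \<bullet> i\<bar>)" by (rule norm_le_l1)
  also have "\<dots> \<le> (\<Sum>i\<in>(Basis::'p set). \<bar>v \<bullet> i0\<bar>)" by (rule sum_mono) (rule le)
  also have "\<dots> = DIM('p) * \<bar>v \<bullet> i0\<bar>" by simp
  finally have "c * norm v \<le> c * (DIM('p) * \<bar>v \<bullet> i0\<bar>)" using c by (rule mult_left_mono)
  then have "exp (c * norm v) \<le> exp ((c * DIM('p)) * \<bar>v \<bullet> i0\<bar>)" by (simp add: mult.assoc)
  also have "\<dots> \<le> exp ((c * DIM('p)) * (v \<bullet> i0)) + exp (- (c * DIM('p)) * (v \<bullet> i0))"
    by (rule exp_abs_le)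
  also have "\<dots> \<le> ?R"
    by (rule member_le_sum[OF i0(1)]) (simp_all add: add_nonneg_nonneg)
  finally show ?thesis .
qed

locale expfam =
  fixes \<nu> :: "'x measure" and T :: "'x \<Rightarrow> 'p::euclidean_space"
  assumes fam: "regular_minimal_expfam \<nu> T"
begin

abbreviation "Th \<equiv> nat_param_space \<nu> T"
abbreviation "Z \<theta> \<equiv> (\<integral>x. exp (\<theta> \<bullet> T x) \<partial>\<nu>)"
abbreviation "A \<equiv> log_partition \<nu> T"

lemma T_meas[measurable]: "T \<in> borel_measurable \<nu>"
  using fam by (simp add: regular_minimal_expfam_def)

lemma Th_open: "open Th" and Th_ne: "Th \<noteq> {}"
  using fam by (auto simp: regular_minimal_expfam_def)

lemma minimal: "(AE x in \<nu>. a \<bullet> T x = c) \<Longrightarrow> a = 0"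
  using fam by (auto simp: regular_minimal_expfam_def)

lemma exp_meas[measurable]: "(\<lambda>x. exp (\<theta> \<bullet> T x)) \<in> borel_measurable \<nu>"
  by measurable

lemma int_exp: "\<theta> \<in> Th \<Longrightarrow> integrable \<nu> (\<lambda>x. exp (\<theta> \<bullet> T x))"
  by (simp add: nat_param_space_def)

lemma A_def': "A \<theta> = ln (Z \<theta>)"
  by (simp add: log_partition_def)

lemma not_AE_False: "\<not> (AE x in \<nu>. False)"
proof
  assume h: "AE x in \<nu>. False"
  obtain b :: 'p where b: "b \<in> Basis" using nonempty_Basis by blast
  have "AE x in \<nu>. b \<bullet> T x = 0" using h by (rule eventually_mono) simp
  then have "b = 0" by (rule minimal)
  with b show False by simp
qed

lemma Z_pos: assumes "\<theta> \<in> Th" shows "0 < Z \<theta>"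
proof -
  have i: "integrable \<nu> (\<lambda>x. exp (\<theta> \<bullet> T x))" using assms by (rule int_exp)
  have ge: "0 \<le> Z \<theta>" by (rule integral_nonneg_AE) simp
  moreover have "Z \<theta> \<noteq> 0"
  proof
    assume "Z \<theta> = 0"
    then have "AE x in \<nu>. exp (\<theta> \<bullet> T x) = 0"
      using integral_nonneg_eq_0_iff_AE[OF i] by simp
    then have "AE x in \<nu>. False" by (rule eventually_mono) simp
    with not_AE_False show False by simp
  qed
  ultimately show ?thesis by linarith
qed

lemma exp_A: "\<theta> \<in> Th \<Longrightarrow> exp (A \<theta>) = Z \<theta>"
  using Z_pos by (simp add: A_def')

lemma exp_conv: "0 \<le> (t::real) \<Longrightarrow> t \<le> 1 \<Longrightarrow> exp ((1 - t) * u + t * v) \<le> (1 - t) * exp u + t * exp v"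
  using convex_onD[OF exp_convex, of t u v] by simp

lemma conv:
  assumes a: "a \<in> Th" and b: "b \<in> Th" and t: "0 \<le> t" "t \<le> 1"
  shows "(1 - t) *\<^sub>R a + t *\<^sub>R b \<in> Th \<and>
         A ((1 - t) *\<^sub>R a + t *\<^sub>R b) \<le> (1 - t) * A a + t * A b"
proof -
  define c where "c = (1 - t) *\<^sub>R a + t *\<^sub>R b"
  have ia: "integrable \<nu> (\<lambda>x. exp (a \<bullet> T x))" using a by (rule int_exp)
  have ib: "integrable \<nu> (\<lambda>x. exp (b \<bullet> T x))" using b by (rule int_exp)
  have cT: "c \<bullet> T x = (1 - t) * (a \<bullet> T x) + t * (b \<bullet> T x)" for x
    by (simp add: c_def inner_add_left)
  have ic: "integrable \<nu> (\<lambda>x. exp (c \<bullet> T x))"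
  proof (rule Bochner_Integration.integrable_bound[OF Bochner_Integration.integrable_add[OF ia ib]])
    show "(\<lambda>x. exp (c \<bullet> T x)) \<in> borel_measurable \<nu>" by measurable
    show "AE x in \<nu>. norm (exp (c \<bullet> T x)) \<le> norm (exp (a \<bullet> T x) + exp (b \<bullet> T x))"
    proof (rule AE_I2)
      fix x
      have "exp (c \<bullet> T x) \<le> (1 - t) * exp (a \<bullet> T x) + t * exp (b \<bullet> T x)"
        unfolding cT using exp_conv[OF t] .
      also have "\<dots> \<le> exp (a \<bullet> T x) + exp (b \<bullet> T x)"
        using t by (intro add_mono) (auto intro!: mult_left_le_one_le)
      finally show "norm (exp (c \<bullet> T x)) \<le> norm (exp (a \<bullet> T x) + exp (b \<bullet> T x))"
        by simp
    qed
  qed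
  then have cTh: "c \<in> Th" by (simp add: nat_param_space_def)
  define K where "K = (1 - t) * A a + t * A b"
  have Za: "0 < Z a" and Zb: "0 < Z b" using Z_pos a b by auto
  have pw: "exp (c \<bullet> T x) * exp (- K) \<le> (1 - t) * (exp (a \<bullet> T x) / Z a) + t * (exp (b \<bullet> T x) / Z b)" for x
  proof -
    have "exp (c \<bullet> T x) * exp (- K) = exp ((1 - t) * (a \<bullet> T x - A a) + t * (b \<bullet> T x - A b))"
      by (simp add: cT K_def flip: exp_add) (simp add: algebra_simps)
    also have "\<dots> \<le> (1 - t) * exp (a \<bullet> T x - A a) + t * exp (b \<bullet> T x - A b)"
      by (rule exp_conv[OF t])
    also have "\<dots> = (1 - t) * (exp (a \<bullet> T x) / Z a) + t * (exp (b \<bullet> T x) / Z b)"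
      using exp_A[OF a] exp_A[OF b] by (simp add: exp_diff)
    finally show ?thesis .
  qed
  have "Z c * exp (- K) = (\<integral>x. exp (c \<bullet> T x) * exp (- K) \<partial>\<nu>)" by simp
  also have "\<dots> \<le> (\<integral>x. (1 - t) * (exp (a \<bullet> T x) / Z a) + t * (exp (b \<bullet> T x) / Z b) \<partial>\<nu>)"
    using pw ic ia ib by (intro integral_mono) auto
  also have "\<dots> = (1 - t) * (Z a / Z a) + t * (Z b / Z b)"
    using ia ib by simp
  also have "\<dots> = 1" using Za Zb by simp
  finally have "Z c \<le> exp K" by (simp add: exp_minus field_simps)
  then have "ln (Z c) \<le> ln (exp K)"
    using Z_pos[OF cTh] by (subst ln_le_cancel_iff) auto
  then have "A c \<le> K" by (simp add: A_def')
  with cTh show ?thesis by (simp add: c_def K_def)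
qed

lemma mid_Th: "a \<in> Th \<Longrightarrow> b \<in> Th \<Longrightarrow> (1/2) *\<^sub>R a + (1/2) *\<^sub>R b \<in> Th"
  using conv[of a b "1/2"] by simp

lemma strict:
  assumes a: "a \<in> Th" and b: "b \<in> Th" and ab: "a \<noteq> b"
  shows "A ((1/2) *\<^sub>R a + (1/2) *\<^sub>R b) < (A a + A b) / 2"
proof (rule ccontr)
  define c where "c = (1/2) *\<^sub>R a + (1/2) *\<^sub>R b"
  assume "\<not> A ((1/2) *\<^sub>R a + (1/2) *\<^sub>R b) < (A a + A b) / 2"
  then have le: "(A a + A b) / 2 \<le> A c" by (simp add: c_def)
  have cTh: "c \<in> Th" using mid_Th[OF a b] by (simp add: c_def)
  have ia: "integrable \<nu> (\<lambda>x. exp (a \<bullet> T x))" using a by (rule int_exp)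
  have ib: "integrable \<nu> (\<lambda>x. exp (b \<bullet> T x))" using b by (rule int_exp)
  have ic: "integrable \<nu> (\<lambda>x. exp (c \<bullet> T x))" using cTh by (rule int_exp)
  have Za: "0 < Z a" and Zb: "0 < Z b" using Z_pos a b by auto
  define K where "K = (A a + A b) / 2"
  define f where "f x = exp ((a \<bullet> T x - A a) / 2)" for x
  define g where "g x = exp ((b \<bullet> T x - A b) / 2)" for x
  define h where "h x = exp (a \<bullet> T x) / Z a + exp (b \<bullet> T x) / Z b - 2 * (exp (c \<bullet> T x) * exp (- K))" for x
  have sq: "exp y ^ 2 = exp (2 * y)" for y :: real
    by (simp add: power2_eq_square flip: exp_add)
  have two_half: "2 * ((y - z) / 2) = y - z" for y z :: real by simp
  have hfg: "h x = (f x - g x) ^ 2" for x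
  proof -
    have f2: "f x ^ 2 = exp (a \<bullet> T x) / Z a"
      unfolding f_def sq two_half using exp_A[OF a] by (simp add: exp_diff)
    have g2: "g x ^ 2 = exp (b \<bullet> T x) / Z b"
      unfolding g_def sq two_half using exp_A[OF b] by (simp add: exp_diff)
    have fg: "f x * g x = exp (c \<bullet> T x) * exp (- K)"
      unfolding f_def g_def K_def c_def by (simp add: inner_add_left flip: exp_add) (simp add: field_simps)
    show ?thesis by (simp add: h_def power2_diff f2 g2 fg)
  qed
  have ih: "integrable \<nu> h"
    unfolding h_def using ia ib ic by simp
  have "integral\<^sup>L \<nu> h = Z a / Z a + Z b / Z b - 2 * (Z c * exp (- K))"
    unfolding h_def using ia ib ic by simp
  also have "\<dots> = 2 - 2 * (Z c * exp (- K))" using Za Zb by simp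
  also have "\<dots> \<le> 0"
  proof -
    have "exp K \<le> Z c" using le exp_A[OF cTh] K_def by (metis exp_le_cancel_iff)
    then have "1 \<le> Z c * exp (- K)" by (simp add: exp_minus field_simps)
    then show ?thesis by simp
  qed
  finally have i0: "integral\<^sup>L \<nu> h \<le> 0" .
  have hnn: "AE x in \<nu>. 0 \<le> h x" by (simp add: hfg)
  have "integral\<^sup>L \<nu> h = 0" using i0 integral_nonneg_AE[OF hnn] by linarith
  then have "AE x in \<nu>. h x = 0" using integral_nonneg_eq_0_iff_AE[OF ih hnn] by simp
  then have "AE x in \<nu>. (a - b) \<bullet> T x = A a - A b"
  proof (rule eventually_mono)
    fix x assume "h x = 0"
    then have "f x = g x" by (simp add: hfg)
    then have "(a \<bullet> T x - A a) / 2 = (b \<bullet> T x - A b) / 2" by (simp add: f_def g_def)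
    then show "(a - b) \<bullet> T x = A a - A b" by (simp add: inner_diff_left)
  qed
  then have "a - b = 0" by (rule minimal)
  with ab show False by simp
qed

lemma Th_convex: "convex Th"
  unfolding convex_alt using conv by blast

lemma A_convex: "convex_on Th A"
  by (rule convex_onI) (use conv Th_convex in auto)

lemma A_cont: "continuous_on Th A"
  by (rule convex_on_continuous[OF Th_open A_convex])

lemma A_deriv:
  assumes th: "\<theta> \<in> Th"
  shows "\<exists>\<mu>. (A has_derivative (\<lambda>h. \<mu> \<bullet> h)) (at \<theta>)"
proof -
  obtain \<epsilon> where \<epsilon>: "\<epsilon> > 0" "cball \<theta> \<epsilon> \<subseteq> Th"
    using Th_open th open_contains_cball by blast
  define n where "n = real DIM('p)"
  have n: "n \<ge> 1" unfolding n_def using DIM_positive[where 'a='p] by linarith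
  define \<delta> where "\<delta> = \<epsilon> / (2 * n)"
  have \<delta>: "\<delta> > 0" using \<epsilon> n by (simp add: \<delta>_def)
  have \<delta>\<epsilon>: "\<delta> \<le> \<epsilon>" using \<epsilon> n by (simp add: \<delta>_def field_simps)
  define c where "c = 2 * \<delta> * n"
  have c\<epsilon>: "c = \<epsilon>" using n by (simp add: c_def \<delta>_def)
  have pm: "\<theta> + k *\<^sub>R i \<in> Th" if "i \<in> Basis" "\<bar>k\<bar> = c" for i k
  proof -
    have "dist \<theta> (\<theta> + k *\<^sub>R i) = \<bar>k\<bar>" using that by (simp add: dist_norm)
    then show ?thesis using \<epsilon> that c\<epsilon> by auto
  qed
  define D where "D x = exp (\<theta> \<bullet> T x) * ((norm (T x))^2 * exp (\<delta> * norm (T x)))" for x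
  define S where "S x = (\<Sum>i\<in>Basis. exp ((\<theta> + c *\<^sub>R i) \<bullet> T x) + exp ((\<theta> + (- c) *\<^sub>R i) \<bullet> T x))" for x
  have D_meas[measurable]: "D \<in> borel_measurable \<nu>" unfolding D_def by measurable
  have D_nn: "0 \<le> D x" for x unfolding D_def by simp
  have D_le: "D x \<le> (2 / \<delta>^2) * S x" for x
  proof -
    have e1: "exp (2 * \<delta> * norm (T x)) \<le>
        (\<Sum>i\<in>Basis. exp ((2 * \<delta> * DIM('p)) * (T x \<bullet> i)) + exp (- (2 * \<delta> * DIM('p)) * (T x \<bullet> i)))"
      using exp_norm_bound[of "2 * \<delta>" "T x"] \<delta> by simp
    also have "\<dots> = (\<Sum>i\<in>Basis. exp (c * (T x \<bullet> i)) + exp (- c * (T x \<bullet> i)))"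
      by (simp add: c_def n_def)
    finally have e2: "exp (2 * \<delta> * norm (T x)) \<le> (\<Sum>i\<in>Basis. exp (c * (T x \<bullet> i)) + exp (- c * (T x \<bullet> i)))" .
    have "D x \<le> exp (\<theta> \<bullet> T x) * ((2 / \<delta>^2) * exp (2 * \<delta> * norm (T x)))"
      unfolding D_def using sq_exp[OF norm_ge_zero \<delta>] by (rule mult_left_mono) simp
    also have "\<dots> \<le> exp (\<theta> \<bullet> T x) * ((2 / \<delta>^2) * (\<Sum>i\<in>Basis. exp (c * (T x \<bullet> i)) + exp (- c * (T x \<bullet> i))))"
      using e2 by (intro mult_left_mono) auto
    also have "\<dots> = (2 / \<delta>^2) * (exp (\<theta> \<bullet> T x) * (\<Sum>i\<in>Basis. exp (c * (T x \<bullet> i)) + exp (- c * (T x \<bullet> i))))"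
      by (simp add: mult.left_commute)
    also have "exp (\<theta> \<bullet> T x) * (\<Sum>i\<in>Basis. exp (c * (T x \<bullet> i)) + exp (- c * (T x \<bullet> i))) = S x"
      unfolding S_def sum_distrib_left
      by (intro sum.cong refl) (simp add: distrib_left inner_add_left inner_diff_left flip: exp_add, simp add: inner_commute)
    finally show ?thesis .
  qed
  have S_int: "integrable \<nu> S"
    unfolding S_def
    using c\<epsilon> \<epsilon> by (intro Bochner_Integration.integrable_sum Bochner_Integration.integrable_add int_exp pm) auto
  have D_int: "integrable \<nu> D"
  proof (rule Bochner_Integration.integrable_bound[of _ "\<lambda>x. (2 / \<delta>^2) * S x"])
    show "integrable \<nu> (\<lambda>x. (2 / \<delta>^2) * S x)" using S_int by simp
    show "D \<in> borel_measurable \<nu>" by simp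
    show "AE x in \<nu>. norm (D x) \<le> norm ((2 / \<delta>^2) * S x)"
    proof (rule AE_I2)
      fix x
      have "D x \<le> (2 / \<delta>^2) * S x" by (rule D_le)
      moreover have "2 * S x / \<delta>^2 \<le> \<bar>2 * S x\<bar> / \<delta>^2" by (rule divide_right_mono) auto
      ultimately show "norm (D x) \<le> norm ((2 / \<delta>^2) * S x)" using D_nn[of x] by simp
    qed
  qed
  have E_int: "integrable \<nu> (\<lambda>x. exp (\<theta> \<bullet> T x) * (T x \<bullet> i))" if i: "i \<in> Basis" for i
  proof (rule Bochner_Integration.integrable_bound[of _ "\<lambda>x. exp (\<theta> \<bullet> T x) + D x"])
    show "integrable \<nu> (\<lambda>x. exp (\<theta> \<bullet> T x) + D x)"
      using int_exp[OF th] D_int by simp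
    show "(\<lambda>x. exp (\<theta> \<bullet> T x) * (T x \<bullet> i)) \<in> borel_measurable \<nu>" by measurable
    show "AE x in \<nu>. norm (exp (\<theta> \<bullet> T x) * (T x \<bullet> i)) \<le> norm (exp (\<theta> \<bullet> T x) + D x)"
    proof (rule AE_I2)
      fix x
      have "\<bar>T x \<bullet> i\<bar> \<le> norm (T x)" using i by (rule Basis_le_norm)
      also have "\<dots> \<le> 1 + (norm (T x))^2" by (rule le_1_sq) simp
      also have "\<dots> \<le> 1 + (norm (T x))^2 * exp (\<delta> * norm (T x))"
        using \<delta> by (simp add: mult_le_cancel_left1)
      finally have "exp (\<theta> \<bullet> T x) * \<bar>T x \<bullet> i\<bar> \<le> exp (\<theta> \<bullet> T x) * (1 + (norm (T x))^2 * exp (\<delta> * norm (T x)))"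
        by (rule mult_left_mono) simp
      then show "norm (exp (\<theta> \<bullet> T x) * (T x \<bullet> i)) \<le> norm (exp (\<theta> \<bullet> T x) + D x)"
        using D_nn[of x] by (simp add: D_def abs_mult distrib_left)
    qed
  qed
  define I where "I i = (\<integral>x. exp (\<theta> \<bullet> T x) * (T x \<bullet> i) \<partial>\<nu>)" for i
  have Zt: "0 < Z \<theta>" using Z_pos[OF th] .
  define \<mu>0 where "\<mu>0 = (1 / Z \<theta>) *\<^sub>R (\<Sum>i\<in>Basis. I i *\<^sub>R i)"
  have \<mu>h: "\<mu>0 \<bullet> h = (\<Sum>i\<in>Basis. (h \<bullet> i) * I i) / Z \<theta>" for h
    unfolding \<mu>0_def inner_scaleR_left inner_sum_left by (simp add: inner_commute[of _ h] mult.commute)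
  have lin: "(\<integral>x. exp (\<theta> \<bullet> T x) * (h \<bullet> T x) \<partial>\<nu>) = (\<Sum>i\<in>Basis. (h \<bullet> i) * I i)" for h
  proof -
    have "(\<lambda>x. exp (\<theta> \<bullet> T x) * (h \<bullet> T x)) = (\<lambda>x. \<Sum>i\<in>Basis. (h \<bullet> i) * (exp (\<theta> \<bullet> T x) * (T x \<bullet> i)))"
      by (rule ext) (simp add: euclidean_inner[of h "T _"] sum_distrib_left mult.commute mult.left_commute)
    then have "(\<integral>x. exp (\<theta> \<bullet> T x) * (h \<bullet> T x) \<partial>\<nu>) = (\<integral>x. (\<Sum>i\<in>Basis. (h \<bullet> i) * (exp (\<theta> \<bullet> T x) * (T x \<bullet> i))) \<partial>\<nu>)"
      by simp
    also have "\<dots> = (\<Sum>i\<in>Basis. (\<integral>x. (h \<bullet> i) * (exp (\<theta> \<bullet> T x) * (T x \<bullet> i)) \<partial>\<nu>))"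
      by (rule Bochner_Integration.integral_sum) (simp add: E_int)
    also have "\<dots> = (\<Sum>i\<in>Basis. (h \<bullet> i) * I i)"
      by (simp add: I_def)
    finally show ?thesis .
  qed
  define K where "K = integral\<^sup>L \<nu> D / Z \<theta>"
  have K: "0 \<le> K" unfolding K_def using Zt integral_nonneg_AE[of D \<nu>] D_nn by simp
  have upper: "A (\<theta> + h) - A \<theta> - \<mu>0 \<bullet> h \<le> K * (norm h)^2" if h: "norm h \<le> \<delta>" for h
  proof -
    have thh: "\<theta> + h \<in> Th" using h \<delta>\<epsilon> \<epsilon> by (auto simp: dist_norm)
    have pw: "exp ((\<theta> + h) \<bullet> T x) \<le> exp (\<theta> \<bullet> T x) + exp (\<theta> \<bullet> T x) * (h \<bullet> T x) + (norm h)^2 * D x" for x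
    proof -
      define y where "y = h \<bullet> T x"
      have ay: "\<bar>y\<bar> \<le> norm h * norm (T x)" unfolding y_def by (rule Cauchy_Schwarz_ineq2)
      have y2: "y^2 \<le> (norm h)^2 * (norm (T x))^2"
      proof -
        have "y^2 = \<bar>y\<bar>^2" by simp
        also have "\<dots> \<le> (norm h * norm (T x))^2" using ay by (intro power_mono) auto
        finally show ?thesis by (simp add: power_mult_distrib)
      qed
      have ey: "exp \<bar>y\<bar> \<le> exp (\<delta> * norm (T x))"
        using ay h by (simp add: order_trans[OF _ mult_right_mono])
      have "y^2 * exp \<bar>y\<bar> \<le> ((norm h)^2 * (norm (T x))^2) * exp (\<delta> * norm (T x))"
        using y2 ey by (intro mult_mono) auto
      then have "exp y \<le> 1 + y + (norm h)^2 * ((norm (T x))^2 * exp (\<delta> * norm (T x)))"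
        using exp_quad[of y] by (simp add: mult.assoc)
      then have "exp (\<theta> \<bullet> T x) * exp y \<le> exp (\<theta> \<bullet> T x) * (1 + y + (norm h)^2 * ((norm (T x))^2 * exp (\<delta> * norm (T x))))"
        by (rule mult_left_mono) simp
      then show ?thesis
        by (simp add: y_def D_def inner_add_left exp_add distrib_left mult.left_commute)
    qed
    have "Z (\<theta> + h) \<le> (\<integral>x. exp (\<theta> \<bullet> T x) + exp (\<theta> \<bullet> T x) * (h \<bullet> T x) + (norm h)^2 * D x \<partial>\<nu>)"
    proof (rule integral_mono)
      show "integrable \<nu> (\<lambda>x. exp ((\<theta> + h) \<bullet> T x))" using thh by (rule int_exp)
      have "integrable \<nu> (\<lambda>x. exp (\<theta> \<bullet> T x) * (h \<bullet> T x))"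
      proof -
        have "(\<lambda>x. exp (\<theta> \<bullet> T x) * (h \<bullet> T x)) = (\<lambda>x. \<Sum>i\<in>Basis. (h \<bullet> i) * (exp (\<theta> \<bullet> T x) * (T x \<bullet> i)))"
          by (rule ext) (simp add: euclidean_inner[of h "T _"] sum_distrib_left mult.commute mult.left_commute)
        then show ?thesis using E_int by simp
      qed
      then show "integrable \<nu> (\<lambda>x. exp (\<theta> \<bullet> T x) + exp (\<theta> \<bullet> T x) * (h \<bullet> T x) + (norm h)^2 * D x)"
        using int_exp[OF th] D_int by simp
      show "\<And>x. x \<in> space \<nu> \<Longrightarrow> exp ((\<theta> + h) \<bullet> T x) \<le> exp (\<theta> \<bullet> T x) + exp (\<theta> \<bullet> T x) * (h \<bullet> T x) + (norm h)^2 * D x"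
        using pw by simp
    qed
    also have "\<dots> = Z \<theta> + (\<integral>x. exp (\<theta> \<bullet> T x) * (h \<bullet> T x) \<partial>\<nu>) + (norm h)^2 * integral\<^sup>L \<nu> D"
    proof -
      have "integrable \<nu> (\<lambda>x. exp (\<theta> \<bullet> T x) * (h \<bullet> T x))"
      proof -
        have "(\<lambda>x. exp (\<theta> \<bullet> T x) * (h \<bullet> T x)) = (\<lambda>x. \<Sum>i\<in>Basis. (h \<bullet> i) * (exp (\<theta> \<bullet> T x) * (T x \<bullet> i)))"
          by (rule ext) (simp add: euclidean_inner[of h "T _"] sum_distrib_left mult.commute mult.left_commute)
        then show ?thesis using E_int by simp
      qed
      then show ?thesis using int_exp[OF th] D_int by simp
    qed
    also have "\<dots> = Z \<theta> + Z \<theta> * (\<mu>0 \<bullet> h) + (norm h)^2 * integral\<^sup>L \<nu> D"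
      using Zt by (simp add: lin \<mu>h)
    finally have Zh: "Z (\<theta> + h) \<le> Z \<theta> + Z \<theta> * (\<mu>0 \<bullet> h) + (norm h)^2 * integral\<^sup>L \<nu> D" .
    have "A (\<theta> + h) - A \<theta> \<le> (Z (\<theta> + h) - Z \<theta>) / Z \<theta>"
      unfolding A_def' by (rule ln_diff_le[OF Z_pos[OF thh] Zt])
    also have "\<dots> \<le> (Z \<theta> * (\<mu>0 \<bullet> h) + (norm h)^2 * integral\<^sup>L \<nu> D) / Z \<theta>"
      using Zh Zt by (intro divide_right_mono) auto
    also have "\<dots> = \<mu>0 \<bullet> h + K * (norm h)^2"
      using Zt by (simp add: K_def field_simps)
    finally show ?thesis by simp
  qed
  have two: "\<bar>A (\<theta> + h) - A \<theta> - \<mu>0 \<bullet> h\<bar> \<le> K * (norm h)^2" if h: "norm h \<le> \<delta>" for h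
  proof -
    have u1: "A (\<theta> + h) - A \<theta> - \<mu>0 \<bullet> h \<le> K * (norm h)^2" using upper h .
    have u2: "A (\<theta> + (- h)) - A \<theta> - \<mu>0 \<bullet> (- h) \<le> K * (norm h)^2" using upper[of "- h"] h by simp
    have thp: "\<theta> + h \<in> Th" and thn: "\<theta> + (- h) \<in> Th" using h \<delta>\<epsilon> \<epsilon> by (auto simp: dist_norm)
    have "A ((1 - 1/2) *\<^sub>R (\<theta> + h) + (1/2) *\<^sub>R (\<theta> + (- h))) \<le> (1 - 1/2) * A (\<theta> + h) + (1/2) * A (\<theta> + (- h))"
      using conv[OF thp thn, of "1/2"] by simp
    moreover have "(1 - 1/2) *\<^sub>R (\<theta> + h) + (1/2) *\<^sub>R (\<theta> + (- h)) = \<theta>"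
    proof -
      have "(1 - 1/2) *\<^sub>R (\<theta> + h) + (1/2) *\<^sub>R (\<theta> + (- h)) = (1/2 + 1/2) *\<^sub>R \<theta> + ((1/2) *\<^sub>R h - (1/2) *\<^sub>R h)"
        unfolding scaleR_add_right scaleR_add_left scaleR_minus_right by (simp add: algebra_simps)
      then show ?thesis by simp
    qed
    ultimately have m: "A \<theta> \<le> (A (\<theta> + h) + A (\<theta> + (- h))) / 2" by simp
    have nh: "\<mu>0 \<bullet> (- h) = - (\<mu>0 \<bullet> h)" by (rule inner_minus_right)
    have u2': "A (\<theta> + (- h)) - A \<theta> + \<mu>0 \<bullet> h \<le> K * (norm h)^2" using u2 nh by simp
    have m2: "A \<theta> * 2 \<le> A (\<theta> + h) + A (\<theta> + (- h))" using m by simp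
    have "- (A (\<theta> + h) - A \<theta> - \<mu>0 \<bullet> h) \<le> K * (norm h)^2" using m2 u2' by linarith
    with u1 show ?thesis unfolding abs_le_iff by blast
  qed
  have "(A has_derivative (\<lambda>h. \<mu>0 \<bullet> h)) (at \<theta>)"
    unfolding has_derivative_at_alt
  proof (intro conjI allI impI)
    show "bounded_linear (\<lambda>h. \<mu>0 \<bullet> h)" by (rule bounded_linear_inner_right)
    fix e :: real assume e: "0 < e"
    define d where "d = min \<delta> (e / (K + 1))"
    have d: "0 < d" using e \<delta> K by (simp add: d_def)
    show "\<exists>d>0. \<forall>y. norm (y - \<theta>) < d \<longrightarrow> norm (A y - A \<theta> - \<mu>0 \<bullet> (y - \<theta>)) \<le> e * norm (y - \<theta>)"
    proof (intro exI[of _ d] conjI allI impI d)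
      fix y assume y: "norm (y - \<theta>) < d"
      define h where "h = y - \<theta>"
      have yh: "y = \<theta> + h" by (simp add: h_def)
      have hd: "norm h \<le> \<delta>" using y by (simp add: h_def d_def)
      have "\<bar>A y - A \<theta> - \<mu>0 \<bullet> h\<bar> \<le> K * (norm h)^2" using two[OF hd] yh by simp
      also have "\<dots> = (K * norm h) * norm h" by (simp add: power2_eq_square)
      also have "\<dots> \<le> e * norm h"
      proof (rule mult_right_mono)
        have "norm h \<le> e / (K + 1)" using y by (simp add: h_def d_def)
        then have "K * norm h \<le> K * (e / (K + 1))" using K by (rule mult_left_mono)
        also have "\<dots> \<le> e" using K e by (simp add: field_simps)
        finally show "K * norm h \<le> e" .
      qed simp
      finally show "norm (A y - A \<theta> - \<mu>0 \<bullet> (y - \<theta>)) \<le> e * norm (y - \<theta>)"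
        by (simp add: h_def)
    qed
  qed
  then show ?thesis by blast
qed

end



context expfam
begin

lemma dq_tendsto:
  assumes d: "(A has_derivative (\<lambda>h. \<mu> \<bullet> h)) (at \<theta>)"
  shows "((\<lambda>t. (A (\<theta> + t *\<^sub>R z) - A \<theta>) / t) \<longlongrightarrow> \<mu> \<bullet> z) (at_right 0)"
proof -
  define g where "g t = \<theta> + t *\<^sub>R z" for t :: real
  have g: "(g has_derivative (\<lambda>t. t *\<^sub>R z)) (at 0)"
    unfolding g_def by (auto intro!: derivative_eq_intros)
  have d': "(A has_derivative (\<lambda>h. \<mu> \<bullet> h)) (at (g 0))" using d by (simp add: g_def)
  have "((A \<circ> g) has_derivative ((\<lambda>h. \<mu> \<bullet> h) \<circ> (\<lambda>t. t *\<^sub>R z))) (at 0)"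
    by (rule diff_chain_at[OF g d'])
  moreover have "((\<lambda>h. \<mu> \<bullet> h) \<circ> (\<lambda>t. t *\<^sub>R z)) = (*) (\<mu> \<bullet> z)"
    by (rule ext) simp
  ultimately have "((A \<circ> g) has_field_derivative (\<mu> \<bullet> z)) (at 0)"
    by (simp add: has_field_derivative_def)
  then have "((\<lambda>y. ((A \<circ> g) y - (A \<circ> g) 0) / (y - 0)) \<longlongrightarrow> \<mu> \<bullet> z) (at 0)"
    by (simp add: has_field_derivative_iff)
  then have "((\<lambda>y. ((A \<circ> g) y - (A \<circ> g) 0) / (y - 0)) \<longlongrightarrow> \<mu> \<bullet> z) (at_right 0)"
    using filterlim_at_split by blast
  then show ?thesis by (simp add: g_def)
qed

lemma dq_lower:
  assumes th: "\<theta> \<in> Th" and d: "(A has_derivative (\<lambda>h. \<mu> \<bullet> h)) (at \<theta>)" and d0: "0 < e"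
    and H: "\<And>t. 0 < t \<Longrightarrow> t < e \<Longrightarrow> \<theta> + t *\<^sub>R z \<in> Th \<Longrightarrow> c * t \<le> A (\<theta> + t *\<^sub>R z) - A \<theta>"
  shows "c \<le> \<mu> \<bullet> z"
proof (rule tendsto_lowerbound[OF dq_tendsto[OF d]])
  show "\<not> trivial_limit (at_right (0::real))" by simp
  obtain r where r: "r > 0" "ball \<theta> r \<subseteq> Th" using Th_open th open_contains_ball by blast
  define b where "b = min e (r / (norm z + 1))"
  have b: "b > 0"
  proof -
    have "0 < norm z + 1" by (simp add: add_nonneg_pos)
    then show ?thesis using r d0 by (simp add: b_def)
  qed
  show "\<forall>\<^sub>F t in at_right 0. c \<le> (A (\<theta> + t *\<^sub>R z) - A \<theta>) / t"
    unfolding eventually_at_right_field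
  proof (intro exI[of _ b] conjI allI impI b)
    fix t :: real assume t: "0 < t" "t < b"
    have "norm (t *\<^sub>R z) = t * norm z" using t by simp
    also have "\<dots> \<le> t * (norm z + 1)" using t by simp
    also have "\<dots> < r"
    proof -
      have "t < r / (norm z + 1)" using t by (simp add: b_def)
      then show ?thesis by (simp add: field_simps add_pos_nonneg)
    qed
    finally have "\<theta> + t *\<^sub>R z \<in> Th" using r by (auto simp: dist_norm)
    then have "c * t \<le> A (\<theta> + t *\<^sub>R z) - A \<theta>" using H t by (simp add: b_def)
    then show "c \<le> (A (\<theta> + t *\<^sub>R z) - A \<theta>) / t" using t by (simp add: field_simps)
  qed
qed

lemma dq_upper:
  assumes th: "\<theta> \<in> Th" and d: "(A has_derivative (\<lambda>h. \<mu> \<bullet> h)) (at \<theta>)" and d0: "0 < e"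
    and H: "\<And>t. 0 < t \<Longrightarrow> t < e \<Longrightarrow> \<theta> + t *\<^sub>R z \<in> Th \<Longrightarrow> A (\<theta> + t *\<^sub>R z) - A \<theta> \<le> c * t"
  shows "\<mu> \<bullet> z \<le> c"
proof (rule tendsto_upperbound[OF dq_tendsto[OF d]])
  show "\<not> trivial_limit (at_right (0::real))" by simp
  obtain r where r: "r > 0" "ball \<theta> r \<subseteq> Th" using Th_open th open_contains_ball by blast
  define b where "b = min e (r / (norm z + 1))"
  have b: "b > 0"
  proof -
    have "0 < norm z + 1" by (simp add: add_nonneg_pos)
    then show ?thesis using r d0 by (simp add: b_def)
  qed
  show "\<forall>\<^sub>F t in at_right 0. (A (\<theta> + t *\<^sub>R z) - A \<theta>) / t \<le> c"
    unfolding eventually_at_right_field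
  proof (intro exI[of _ b] conjI allI impI b)
    fix t :: real assume t: "0 < t" "t < b"
    have "norm (t *\<^sub>R z) = t * norm z" using t by simp
    also have "\<dots> \<le> t * (norm z + 1)" using t by simp
    also have "\<dots> < r"
    proof -
      have "t < r / (norm z + 1)" using t by (simp add: b_def)
      then show ?thesis by (simp add: field_simps add_pos_nonneg)
    qed
    finally have "\<theta> + t *\<^sub>R z \<in> Th" using r by (auto simp: dist_norm)
    then have "A (\<theta> + t *\<^sub>R z) - A \<theta> \<le> c * t" using H t by (simp add: b_def)
    then show "(A (\<theta> + t *\<^sub>R z) - A \<theta>) / t \<le> c" using t by (simp add: field_simps)
  qed
qed

lemma GI:
  assumes th0: "\<theta>0 \<in> Th" and d: "(A has_derivative (\<lambda>h. \<mu> \<bullet> h)) (at \<theta>0)" and th: "\<theta> \<in> Th"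
  shows "A \<theta>0 + \<mu> \<bullet> (\<theta> - \<theta>0) \<le> A \<theta>"
proof -
  have "\<mu> \<bullet> (\<theta> - \<theta>0) \<le> A \<theta> - A \<theta>0"
  proof (rule dq_upper[OF th0 d zero_less_one])
    fix t :: real assume t: "0 < t" "t < 1"
    have eq: "\<theta>0 + t *\<^sub>R (\<theta> - \<theta>0) = (1 - t) *\<^sub>R \<theta>0 + t *\<^sub>R \<theta>"
      by (simp add: algebra_simps)
    have "A ((1 - t) *\<^sub>R \<theta>0 + t *\<^sub>R \<theta>) \<le> (1 - t) * A \<theta>0 + t * A \<theta>"
      using conv[OF th0 th, of t] t by simp
    then show "A (\<theta>0 + t *\<^sub>R (\<theta> - \<theta>0)) - A \<theta>0 \<le> (A \<theta> - A \<theta>0) * t"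
      unfolding eq by (simp add: algebra_simps)
  qed
  then show ?thesis by simp
qed

lemma fenchel_lower: "\<theta> \<in> Th \<Longrightarrow> ereal (\<mu> \<bullet> \<theta> - A \<theta>) \<le> fenchel_conj \<nu> T \<mu>"
  unfolding fenchel_conj_def by (rule SUP_upper)

lemma fenchel_at:
  assumes th0: "\<theta>0 \<in> Th" and d: "(A has_derivative (\<lambda>h. \<mu> \<bullet> h)) (at \<theta>0)"
  shows "fenchel_conj \<nu> T \<mu> = ereal (\<mu> \<bullet> \<theta>0 - A \<theta>0)"
  unfolding fenchel_conj_def
proof (rule antisym)
  show "(SUP \<theta>\<in>Th. ereal (\<mu> \<bullet> \<theta> - A \<theta>)) \<le> ereal (\<mu> \<bullet> \<theta>0 - A \<theta>0)"
  proof (rule SUP_least)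
    fix \<theta> assume th: "\<theta> \<in> Th"
    have "A \<theta>0 + \<mu> \<bullet> (\<theta> - \<theta>0) \<le> A \<theta>" by (rule GI[OF th0 d th])
    then show "ereal (\<mu> \<bullet> \<theta> - A \<theta>) \<le> ereal (\<mu> \<bullet> \<theta>0 - A \<theta>0)"
      by (simp add: inner_diff_right)
  qed
  show "ereal (\<mu> \<bullet> \<theta>0 - A \<theta>0) \<le> (SUP \<theta>\<in>Th. ereal (\<mu> \<bullet> \<theta> - A \<theta>))"
    using th0 by (rule SUP_upper)
qed

end



context expfam
begin

lemma level_compact:
  assumes th1: "\<theta>1 \<in> Th" and d1: "(A has_derivative (\<lambda>h. \<mu>1 \<bullet> h)) (at \<theta>1)"
  shows "compact {\<theta>\<in>Th. A \<theta> - \<mu>1 \<bullet> \<theta> \<le> c}"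
proof -
  define G where "G \<theta> = A \<theta> - \<mu>1 \<bullet> \<theta>" for \<theta>
  define L where "L = {\<theta>\<in>Th. G \<theta> \<le> c}"
  have Gmin: "G \<theta>1 \<le> G \<theta>" if "\<theta> \<in> Th" for \<theta>
    using GI[OF th1 d1 that] by (simp add: G_def inner_diff_right)
  have Gcont: "continuous_on Th G"
    unfolding G_def by (intro continuous_on_diff A_cont continuous_intros)
  have Gconv: "G ((1 - t) *\<^sub>R \<theta> + t *\<^sub>R \<theta>') \<le> (1 - t) * G \<theta> + t * G \<theta>'"
    if "\<theta> \<in> Th" "\<theta>' \<in> Th" "0 \<le> t" "t \<le> 1" for \<theta> \<theta>' t
    using conv[OF that] by (simp add: G_def inner_add_right algebra_simps)
  obtain \<rho> where \<rho>: "\<rho> > 0" "cball \<theta>1 \<rho> \<subseteq> Th"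
    using Th_open th1 open_contains_cball by blast
  have sph: "sphere \<theta>1 \<rho> \<subseteq> Th" using \<rho> sphere_cball by blast
  have sne: "sphere \<theta>1 \<rho> \<noteq> {}" using \<rho> by simp
  obtain u0 where u0: "u0 \<in> sphere \<theta>1 \<rho>" "\<forall>y\<in>sphere \<theta>1 \<rho>. G u0 \<le> G y"
    using continuous_attains_inf[OF compact_sphere sne continuous_on_subset[OF Gcont sph]] by blast
  define \<delta> where "\<delta> = G u0 - G \<theta>1"
  have \<delta>: "\<delta> > 0"
  proof -
    have u0Th: "u0 \<in> Th" using u0 sph by blast
    have ne: "\<theta>1 \<noteq> u0" using u0 \<rho> by auto
    define mm where "mm = (1/2) *\<^sub>R \<theta>1 + (1/2) *\<^sub>R u0"
    have mmTh: "mm \<in> Th" unfolding mm_def by (rule mid_Th[OF th1 u0Th])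
    have "A mm < (A \<theta>1 + A u0) / 2" unfolding mm_def by (rule strict[OF th1 u0Th ne])
    moreover have "\<mu>1 \<bullet> mm = (\<mu>1 \<bullet> \<theta>1 + \<mu>1 \<bullet> u0) / 2" by (simp add: mm_def inner_add_right)
    ultimately have "G mm < (G \<theta>1 + G u0) / 2" by (simp add: G_def)
    moreover have "G \<theta>1 \<le> G mm" using Gmin[OF mmTh] .
    ultimately show ?thesis by (simp add: \<delta>_def)
  qed
  have far: "dist \<theta>1 \<theta> * \<delta> \<le> \<rho> * (G \<theta> - G \<theta>1)" if th: "\<theta> \<in> Th" and rd: "\<rho> \<le> dist \<theta>1 \<theta>" for \<theta>
  proof -
    define r where "r = dist \<theta>1 \<theta>"
    have r: "r > 0" using rd \<rho> unfolding r_def by linarith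
    define t where "t = \<rho> / r"
    have t: "0 < t" "t \<le> 1" using r \<rho> rd by (auto simp: t_def r_def)
    define p where "p = (1 - t) *\<^sub>R \<theta>1 + t *\<^sub>R \<theta>"
    have "\<theta>1 - p = t *\<^sub>R (\<theta>1 - \<theta>)" by (simp add: p_def algebra_simps)
    then have "dist \<theta>1 p = t * r" using t by (simp add: dist_norm r_def)
    also have "\<dots> = \<rho>" using r by (simp add: t_def)
    finally have "p \<in> sphere \<theta>1 \<rho>" by simp
    then have "G u0 \<le> G p" using u0 by blast
    also have "G p \<le> (1 - t) * G \<theta>1 + t * G \<theta>" unfolding p_def using Gconv[OF th1 th] t by simp
    finally have "\<delta> \<le> t * (G \<theta> - G \<theta>1)" by (simp add: \<delta>_def algebra_simps)
    then have "r * \<delta> \<le> r * (t * (G \<theta> - G \<theta>1))" using r by simp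
    also have "\<dots> = \<rho> * (G \<theta> - G \<theta>1)" using r by (simp add: t_def)
    finally show ?thesis by (simp add: r_def)
  qed
  have bnd: "bounded L"
  proof (rule bounded_subset[OF bounded_cball])
    show "L \<subseteq> cball \<theta>1 (max \<rho> (\<rho> * (c - G \<theta>1) / \<delta>))"
    proof
      fix \<theta> assume "\<theta> \<in> L"
      then have th: "\<theta> \<in> Th" and Gc: "G \<theta> \<le> c" by (auto simp: L_def)
      show "\<theta> \<in> cball \<theta>1 (max \<rho> (\<rho> * (c - G \<theta>1) / \<delta>))"
      proof (cases "\<rho> \<le> dist \<theta>1 \<theta>")
        case True
        have "dist \<theta>1 \<theta> * \<delta> \<le> \<rho> * (c - G \<theta>1)"
          using far[OF th True] Gc \<rho> by (smt (verit) mult_left_mono)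
        then have "dist \<theta>1 \<theta> \<le> \<rho> * (c - G \<theta>1) / \<delta>" using \<delta> by (simp add: field_simps)
        then show ?thesis by simp
      next
        case False
        then show ?thesis by simp
      qed
    qed
  qed
  have cl: "closed L"
    unfolding closed_sequential_limits
  proof (intro allI impI, elim conjE)
    fix x l assume xL: "\<forall>n. x n \<in> L" and xl: "x \<longlonglongrightarrow> l"
    have xTh: "x n \<in> Th" and xc: "A (x n) - \<mu>1 \<bullet> x n \<le> c" for n
      using xL by (auto simp: L_def G_def)
    have "(\<lambda>n. \<mu>1 \<bullet> x n) \<longlonglongrightarrow> \<mu>1 \<bullet> l" using xl by (intro tendsto_intros)
    then have ev: "eventually (\<lambda>n. \<mu>1 \<bullet> x n < \<mu>1 \<bullet> l + 1) sequentially"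
      by (rule order_tendstoD) simp
    define B where "B = exp (c + \<mu>1 \<bullet> l + 1)"
    have nnZ: "(\<integral>\<^sup>+ y. ennreal (exp (\<theta> \<bullet> T y)) \<partial>\<nu>) = ennreal (Z \<theta>)" if "\<theta> \<in> Th" for \<theta>
      using int_exp[OF that] by (intro nn_integral_eq_integral) auto
    have evB: "eventually (\<lambda>n. (\<integral>\<^sup>+ y. ennreal (exp (x n \<bullet> T y)) \<partial>\<nu>) \<le> ennreal B) sequentially"
      using ev
    proof (rule eventually_mono)
      fix n assume h: "\<mu>1 \<bullet> x n < \<mu>1 \<bullet> l + 1"
      have "Z (x n) = exp (A (x n))" using exp_A[OF xTh] by simp
      also have "\<dots> \<le> B" unfolding B_def using xc[of n] h by simp
      finally show "(\<integral>\<^sup>+ y. ennreal (exp (x n \<bullet> T y)) \<partial>\<nu>) \<le> ennreal B"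
        using nnZ[OF xTh] by (simp add: ennreal_leI)
    qed
    have "(\<integral>\<^sup>+ y. ennreal (exp (l \<bullet> T y)) \<partial>\<nu>) = (\<integral>\<^sup>+ y. liminf (\<lambda>n. ennreal (exp (x n \<bullet> T y))) \<partial>\<nu>)"
    proof (intro nn_integral_cong)
      fix y
      have lim: "(\<lambda>n. ennreal (exp (x n \<bullet> T y))) \<longlonglongrightarrow> ennreal (exp (l \<bullet> T y))"
        using xl by (intro tendsto_intros)
      show "ennreal (exp (l \<bullet> T y)) = liminf (\<lambda>n. ennreal (exp (x n \<bullet> T y)))"
        using lim_imp_Liminf[OF sequentially_bot lim] by (rule sym)
    qed
    also have "\<dots> \<le> liminf (\<lambda>n. \<integral>\<^sup>+ y. ennreal (exp (x n \<bullet> T y)) \<partial>\<nu>)"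
      by (rule nn_integral_liminf) measurable
    also have "\<dots> \<le> limsup (\<lambda>n. \<integral>\<^sup>+ y. ennreal (exp (x n \<bullet> T y)) \<partial>\<nu>)"
      by (rule Liminf_le_Limsup) simp
    also have "\<dots> \<le> ennreal B" by (rule Limsup_bounded[OF evB])
    finally have le: "(\<integral>\<^sup>+ y. ennreal (exp (l \<bullet> T y)) \<partial>\<nu>) \<le> ennreal B" .
    have fin: "(\<integral>\<^sup>+ y. ennreal (exp (l \<bullet> T y)) \<partial>\<nu>) < top"
      using le_less_trans[OF le ennreal_less_top] .
    have "integrable \<nu> (\<lambda>y. exp (l \<bullet> T y))"
      by (rule integrableI_bounded) (use fin in simp_all)
    then have lTh: "l \<in> Th" by (simp add: nat_param_space_def)
    have "isCont G l" using Gcont lTh Th_open continuous_on_eq_continuous_at by blast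
    then have "(\<lambda>n. G (x n)) \<longlonglongrightarrow> G l" using xl by (rule isCont_tendsto_compose)
    then have "G l \<le> c" by (rule tendsto_upperbound) (use xc in \<open>simp_all add: G_def\<close>)
    then show "l \<in> L" using lTh by (simp add: L_def)
  qed
  have "compact L" using bnd cl compact_eq_bounded_closed by blast
  then show ?thesis by (simp add: L_def G_def)
qed

end



context expfam
begin

lemma S2_core:
  assumes mu1C: "\<mu>1 \<in> C" and th1: "\<theta>1 \<in> Th" and d1: "(A has_derivative (\<lambda>h. \<mu>1 \<bullet> h)) (at \<theta>1)"
    and thh: "\<theta>h \<in> Th"
  shows "\<exists>\<theta>s m. \<theta>s \<in> Th \<and> (\<forall>\<mu>\<in>C. A \<theta>s + (\<theta>h - \<theta>s) \<bullet> \<mu> \<le> m) \<and>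
           (\<forall>\<theta> c. \<theta> \<in> Th \<longrightarrow> (\<forall>\<mu>\<in>C. A \<theta> + (\<theta>h - \<theta>) \<bullet> \<mu> \<le> c) \<longrightarrow> m \<le> c)"
proof -
  define P where "P \<theta> c \<longleftrightarrow> \<theta> \<in> Th \<and> (\<forall>\<mu>\<in>C. A \<theta> + (\<theta>h - \<theta>) \<bullet> \<mu> \<le> c)" for \<theta> c
  define V where "V = {c. \<exists>\<theta>. P \<theta> c}"
  define c0 where "c0 = A \<theta>1 - \<mu>1 \<bullet> \<theta>1 + \<mu>1 \<bullet> \<theta>h"
  have Pmono: "P \<theta> c'" if "P \<theta> c" "c \<le> c'" for \<theta> c c'
    using that by (auto simp: P_def)
  have lev: "A \<theta> - \<mu>1 \<bullet> \<theta> \<le> c - \<mu>1 \<bullet> \<theta>h" if "P \<theta> c" for \<theta> c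
  proof -
    have "A \<theta> + (\<theta>h - \<theta>) \<bullet> \<mu>1 \<le> c" using that mu1C by (auto simp: P_def)
    moreover have "(\<theta>h - \<theta>) \<bullet> \<mu>1 = \<mu>1 \<bullet> \<theta>h - \<mu>1 \<bullet> \<theta>"
      unfolding inner_diff_left by (simp add: inner_commute)
    ultimately show ?thesis by linarith
  qed
  have lb: "c0 \<le> c" if "P \<theta> c" for \<theta> c
  proof -
    have th: "\<theta> \<in> Th" using that by (simp add: P_def)
    have "A \<theta>1 + \<mu>1 \<bullet> (\<theta> - \<theta>1) \<le> A \<theta>" by (rule GI[OF th1 d1 th])
    then show ?thesis using lev[OF that] by (simp add: c0_def inner_diff_right)
  qed
  have PV: "P \<theta>h (A \<theta>h)" using thh by (simp add: P_def)
  then have Vne: "V \<noteq> {}" by (auto simp: V_def)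
  have bdd: "bdd_below V" unfolding V_def using lb by (intro bdd_belowI[of _ c0]) blast
  define m where "m = Inf V"
  have m_le: "m \<le> c" if "P \<theta> c" for \<theta> c
    unfolding m_def by (rule cInf_lower) (use that bdd in \<open>auto simp: V_def\<close>)
  have ex_below: "\<exists>\<theta>. P \<theta> c" if "m < c" for c
  proof -
    have "Inf V < c" using that by (simp add: m_def)
    then obtain c' where "c' \<in> V" "c' < c" using cInf_less_iff[OF Vne bdd] by blast
    then obtain \<theta> where th: "P \<theta> c'" "c' < c" by (auto simp: V_def)
    have "P \<theta> c" using Pmono[OF th(1)] th(2) by simp
    then show ?thesis by blast
  qed
  define K where "K c = {\<theta>. P \<theta> c}" for c
  have K_sub: "K c \<subseteq> {\<theta>\<in>Th. A \<theta> - \<mu>1 \<bullet> \<theta> \<le> c - \<mu>1 \<bullet> \<theta>h}" for c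
    using lev by (auto simp: K_def P_def)
  have K_closed: "closed (K c)" for c
    unfolding closed_sequential_limits
  proof (intro allI impI, elim conjE)
    fix x l assume xK: "\<forall>n. x n \<in> K c" and xl: "x \<longlonglongrightarrow> l"
    have "closed {\<theta>\<in>Th. A \<theta> - \<mu>1 \<bullet> \<theta> \<le> c - \<mu>1 \<bullet> \<theta>h}"
      using level_compact[OF th1 d1] compact_imp_closed by blast
    moreover have "\<forall>n. x n \<in> {\<theta>\<in>Th. A \<theta> - \<mu>1 \<bullet> \<theta> \<le> c - \<mu>1 \<bullet> \<theta>h}" using xK K_sub by blast
    ultimately have "l \<in> {\<theta>\<in>Th. A \<theta> - \<mu>1 \<bullet> \<theta> \<le> c - \<mu>1 \<bullet> \<theta>h}"
      using xl closed_sequential_limits by blast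
    then have lTh: "l \<in> Th" by simp
    have cA: "isCont A l" using A_cont lTh Th_open continuous_on_eq_continuous_at by blast
    have "A l + (\<theta>h - l) \<bullet> \<mu> \<le> c" if mu: "\<mu> \<in> C" for \<mu>
    proof -
      have "(\<lambda>n. A (x n) + (\<theta>h - x n) \<bullet> \<mu>) \<longlonglongrightarrow> A l + (\<theta>h - l) \<bullet> \<mu>"
        by (intro tendsto_intros isCont_tendsto_compose[OF cA] xl)
      moreover have "\<forall>n. A (x n) + (\<theta>h - x n) \<bullet> \<mu> \<le> c" using xK mu by (auto simp: K_def P_def)
      ultimately show ?thesis by (intro tendsto_upperbound[of _ _ sequentially]) auto
    qed
    then show "l \<in> K c" using lTh by (simp add: K_def P_def)
  qed
  have K_compact: "compact (K c)" for c
  proof -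
    have "compact ({\<theta>\<in>Th. A \<theta> - \<mu>1 \<bullet> \<theta> \<le> c - \<mu>1 \<bullet> \<theta>h} \<inter> K c)"
      using level_compact[OF th1 d1] K_closed by blast
    moreover have "{\<theta>\<in>Th. A \<theta> - \<mu>1 \<bullet> \<theta> \<le> c - \<mu>1 \<bullet> \<theta>h} \<inter> K c = K c" using K_sub by blast
    ultimately show ?thesis by simp
  qed
  have "K (m + 1) \<inter> \<Inter>(K ` {m<..}) \<noteq> {}"
  proof (rule compact_imp_fip[OF K_compact])
    show "closed T" if "T \<in> K ` {m<..}" for T using that K_closed by blast
    fix F' assume fin: "finite F'" and sub: "F' \<subseteq> K ` {m<..}"
    obtain C' where C': "C' \<subseteq> {m<..}" "finite C'" "F' = K ` C'"
      using finite_subset_image[OF fin sub] by blast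
    define cs where "cs = Min (insert (m + 1) C')"
    have cs: "m < cs" using C' by (auto simp: cs_def subset_eq)
    obtain \<theta> where th: "P \<theta> cs" using ex_below[OF cs] by blast
    have "\<theta> \<in> K (m + 1)" using th Pmono[OF th, of "m + 1"] C' by (simp add: K_def cs_def)
    moreover have "\<theta> \<in> K c" if "c \<in> C'" for c
      using Pmono[OF th, of c] that C' by (simp add: K_def cs_def)
    ultimately show "K (m + 1) \<inter> \<Inter>F' \<noteq> {}" using C' by blast
  qed
  then obtain \<theta>s where ths: "\<theta>s \<in> K (m + 1)" "\<And>c. m < c \<Longrightarrow> \<theta>s \<in> K c" by blast
  have thsTh: "\<theta>s \<in> Th" using ths(1) by (simp add: K_def P_def)
  have "A \<theta>s + (\<theta>h - \<theta>s) \<bullet> \<mu> \<le> m" if mu: "\<mu> \<in> C" for \<mu>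
  proof (rule ccontr)
    define x where "x = A \<theta>s + (\<theta>h - \<theta>s) \<bullet> \<mu>"
    assume "\<not> A \<theta>s + (\<theta>h - \<theta>s) \<bullet> \<mu> \<le> m"
    then have xm: "m < x" by (simp add: x_def)
    then have "m < (x + m) / 2" by simp
    then have "\<theta>s \<in> K ((x + m) / 2)" by (rule ths(2))
    then have "x \<le> (x + m) / 2" using mu by (simp add: K_def P_def x_def)
    then show False using xm by simp
  qed
  then show ?thesis using thsTh m_le unfolding P_def by blast
qed

end



theorem proposition4p3:
  fixes \<nu> :: "'x measure"
    and T :: "'x \<Rightarrow> 'a::euclidean_space \<times> 'b::euclidean_space"
    and Mu' :: "'a set" and Thv' :: "'b set"
    and t \<theta>h :: "'a \<times> 'b"
  assumes fam: "regular_minimal_expfam \<nu> T"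
    and Mu'_sub: "Mu' \<subseteq> fst ` mean_param_space \<nu> T"
    and Mu'_convex: "convex Mu'"
    and Mu'_closed: "closedin (top_of_set (fst ` mean_param_space \<nu> T)) Mu'"
    and Mu'_ne: "Mu' \<noteq> {}"
    and Thv'_sub: "Thv' \<subseteq> snd ` nat_param_space \<nu> T"
    and Thv'_convex: "convex Thv'"
    and Thv'_closed: "closedin (top_of_set (snd ` nat_param_space \<nu> T)) Thv'"
    and t_in: "t \<in> closure (mean_param_space \<nu> T)"
    and S1: "S1_opt \<nu> T Thv' t \<theta>h"
  shows "(\<forall>\<theta>. S1_opt \<nu> T Thv' t \<theta> \<longrightarrow> \<theta> = \<theta>h) \<and> (\<exists>!\<mu>. S2_opt \<nu> T Mu' \<theta>h \<mu>)"
proof -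
  interpret E: expfam \<nu> T using fam by unfold_locales
  let ?Th = "nat_param_space \<nu> T"
  let ?A = "log_partition \<nu> T"
  let ?M = "mean_param_space \<nu> T"
  have thhC: "\<theta>h \<in> C_v \<nu> T Thv'" and opt: "\<forall>\<theta>'\<in>C_v \<nu> T Thv'. ?A \<theta>h - t \<bullet> \<theta>h \<le> ?A \<theta>' - t \<bullet> \<theta>'"
    using S1 by (auto simp: S1_opt_def)
  have thh: "\<theta>h \<in> ?Th" using thhC by (simp add: C_v_def)
  have part1: "\<forall>\<theta>. S1_opt \<nu> T Thv' t \<theta> \<longrightarrow> \<theta> = \<theta>h"
  proof (intro allI impI)
    fix \<theta> assume S: "S1_opt \<nu> T Thv' t \<theta>"
    then have thC: "\<theta> \<in> C_v \<nu> T Thv'" and opt2: "\<forall>\<theta>'\<in>C_v \<nu> T Thv'. ?A \<theta> - t \<bullet> \<theta> \<le> ?A \<theta>' - t \<bullet> \<theta>'"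
      by (auto simp: S1_opt_def)
    show "\<theta> = \<theta>h"
    proof (rule ccontr)
      assume ne: "\<theta> \<noteq> \<theta>h"
      define mid where "mid = (1/2) *\<^sub>R \<theta> + (1/2) *\<^sub>R \<theta>h"
      have th: "\<theta> \<in> ?Th" "snd \<theta> \<in> Thv'" using thC by (auto simp: C_v_def)
      have th2: "snd \<theta>h \<in> Thv'" using thhC by (auto simp: C_v_def)
      have midTh: "mid \<in> ?Th" unfolding mid_def by (rule E.mid_Th[OF th(1) thh])
      have "snd mid = (1/2) *\<^sub>R snd \<theta> + (1/2) *\<^sub>R snd \<theta>h" by (simp add: mid_def)
      also have "\<dots> \<in> Thv'" by (rule convexD[OF Thv'_convex th(2) th2]) auto
      finally have midC: "mid \<in> C_v \<nu> T Thv'" using midTh by (simp add: C_v_def)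
      have f1: "?A \<theta>h - t \<bullet> \<theta>h \<le> ?A mid - t \<bullet> mid" using opt midC by blast
      have f2: "?A \<theta>h - t \<bullet> \<theta>h \<le> ?A \<theta> - t \<bullet> \<theta>" using opt thC by blast
      have f3: "?A \<theta> - t \<bullet> \<theta> \<le> ?A \<theta>h - t \<bullet> \<theta>h" using opt2 thhC by blast
      have "?A mid < (?A \<theta> + ?A \<theta>h) / 2" unfolding mid_def by (rule E.strict[OF th(1) thh ne])
      then have s: "2 * ?A mid < ?A \<theta> + ?A \<theta>h" by simp
      have tm: "2 * (t \<bullet> mid) = t \<bullet> \<theta> + t \<bullet> \<theta>h" by (simp add: mid_def inner_add_right)
      show False using f1 f2 f3 s tm by linarith
    qed
  qed
  define C where "C = C_u \<nu> T Mu'"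
  obtain u1 where u1: "u1 \<in> Mu'" using Mu'_ne by blast
  then obtain \<mu>1 where mu1: "\<mu>1 \<in> ?M" "fst \<mu>1 = u1" using Mu'_sub by auto
  then obtain \<theta>1 where th1: "\<theta>1 \<in> ?Th" and d1: "(?A has_derivative (\<lambda>h. \<mu>1 \<bullet> h)) (at \<theta>1)"
    by (auto simp: mean_param_space_def)
  have mu1C: "\<mu>1 \<in> C" using mu1 u1 by (simp add: C_def C_u_def)
  obtain \<theta>s m where ths: "\<theta>s \<in> ?Th" and Pm: "\<forall>\<mu>\<in>C. ?A \<theta>s + (\<theta>h - \<theta>s) \<bullet> \<mu> \<le> m"
    and mmin: "\<And>\<theta> c. \<theta> \<in> ?Th \<Longrightarrow> (\<forall>\<mu>\<in>C. ?A \<theta> + (\<theta>h - \<theta>) \<bullet> \<mu> \<le> c) \<Longrightarrow> m \<le> c"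
    using E.S2_core[OF mu1C th1 d1 thh] by blast
  obtain \<mu>0 where d0: "(?A has_derivative (\<lambda>h. \<mu>0 \<bullet> h)) (at \<theta>s)" using E.A_deriv[OF ths] by blast
  have sep: "fst \<mu>0 \<in> closure Mu'"
  proof (rule ccontr)
    assume nin: "fst \<mu>0 \<notin> closure Mu'"
    define K' where "K' = closure Mu' \<times> (UNIV :: 'b set)"
    have "convex K'" unfolding K'_def by (intro convex_Times convex_closure Mu'_convex convex_UNIV)
    moreover have "closed K'" unfolding K'_def by (intro closed_Times closed_closure closed_UNIV)
    moreover have "\<mu>0 \<notin> K'" using nin by (auto simp: K'_def)
    ultimately obtain a b where ab: "a \<bullet> \<mu>0 < b" "\<forall>x\<in>K'. b < a \<bullet> x"
      using separating_hyperplane_closed_point by blast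
    have aC: "b < a \<bullet> \<mu>" if "\<mu> \<in> C" for \<mu>
    proof -
      have "fst \<mu> \<in> Mu'" using that by (simp add: C_def C_u_def)
      then have "\<mu> \<in> K'" using closure_subset by (force simp: K'_def mem_Times_iff)
      then show ?thesis using ab by blast
    qed
    have "b \<le> \<mu>0 \<bullet> a"
    proof (rule E.dq_lower[OF ths d0 zero_less_one])
      fix s :: real assume s: "0 < s" "s < 1" "\<theta>s + s *\<^sub>R a \<in> ?Th"
      define th' where "th' = \<theta>s + s *\<^sub>R a"
      have "m \<le> ?A th' + (m - ?A \<theta>s) - s * b"
      proof (rule mmin)
        show "th' \<in> ?Th" using s by (simp add: th'_def)
        show "\<forall>\<mu>\<in>C. ?A th' + (\<theta>h - th') \<bullet> \<mu> \<le> ?A th' + (m - ?A \<theta>s) - s * b"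
        proof
          fix \<mu> assume mu: "\<mu> \<in> C"
          have "(\<theta>h - th') \<bullet> \<mu> = (\<theta>h - \<theta>s) \<bullet> \<mu> - s * (a \<bullet> \<mu>)"
            by (simp add: th'_def inner_diff_left inner_add_left)
          moreover have "(\<theta>h - \<theta>s) \<bullet> \<mu> \<le> m - ?A \<theta>s" using Pm mu by force
          moreover have "s * b \<le> s * (a \<bullet> \<mu>)" using aC[OF mu] s by simp
          ultimately show "?A th' + (\<theta>h - th') \<bullet> \<mu> \<le> ?A th' + (m - ?A \<theta>s) - s * b" by linarith
        qed
      qed
      then show "b * s \<le> ?A (\<theta>s + s *\<^sub>R a) - ?A \<theta>s" by (simp add: th'_def mult.commute)
    qed
    then show False using ab(1) by (simp add: inner_commute)
  qed
  have mu0M: "\<mu>0 \<in> ?M" using ths d0 by (auto simp: mean_param_space_def)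
  have mu0C: "\<mu>0 \<in> C"
  proof -
    obtain F where F: "closed F" "Mu' = fst ` ?M \<inter> F" using Mu'_closed closedin_closed by blast
    have "closure Mu' \<subseteq> F" using F by (intro closure_minimal) auto
    then have "fst \<mu>0 \<in> Mu'" using sep mu0M F(2) by blast
    then show ?thesis using mu0M by (simp add: C_def C_u_def)
  qed
  have eq2: "m - ?A \<theta>s \<le> \<mu>0 \<bullet> (\<theta>h - \<theta>s)"
  proof (rule E.dq_lower[OF ths d0 zero_less_one])
    fix s :: real assume s: "0 < s" "s < 1" "\<theta>s + s *\<^sub>R (\<theta>h - \<theta>s) \<in> ?Th"
    define th' where "th' = \<theta>s + s *\<^sub>R (\<theta>h - \<theta>s)"
    have "m \<le> ?A th' + (1 - s) * (m - ?A \<theta>s)"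
    proof (rule mmin)
      show "th' \<in> ?Th" using s by (simp add: th'_def)
      show "\<forall>\<mu>\<in>C. ?A th' + (\<theta>h - th') \<bullet> \<mu> \<le> ?A th' + (1 - s) * (m - ?A \<theta>s)"
      proof
        fix \<mu> assume mu: "\<mu> \<in> C"
        have "\<theta>h - th' = (1 - s) *\<^sub>R (\<theta>h - \<theta>s)" by (simp add: th'_def algebra_simps)
        then have "(\<theta>h - th') \<bullet> \<mu> = (1 - s) * ((\<theta>h - \<theta>s) \<bullet> \<mu>)" by simp
        moreover have "(\<theta>h - \<theta>s) \<bullet> \<mu> \<le> m - ?A \<theta>s" using Pm mu by force
        then have "(1 - s) * ((\<theta>h - \<theta>s) \<bullet> \<mu>) \<le> (1 - s) * (m - ?A \<theta>s)" using s by (intro mult_left_mono) auto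
        ultimately show "?A th' + (\<theta>h - th') \<bullet> \<mu> \<le> ?A th' + (1 - s) * (m - ?A \<theta>s)" by linarith
      qed
    qed
    then show "(m - ?A \<theta>s) * s \<le> ?A (\<theta>s + s *\<^sub>R (\<theta>h - \<theta>s)) - ?A \<theta>s"
      by (simp add: th'_def algebra_simps)
  qed
  have val: "?A \<theta>s + (\<theta>h - \<theta>s) \<bullet> \<mu>0 = m"
  proof -
    have "?A \<theta>s + (\<theta>h - \<theta>s) \<bullet> \<mu>0 \<le> m" using Pm mu0C by blast
    moreover have "m - ?A \<theta>s \<le> (\<theta>h - \<theta>s) \<bullet> \<mu>0" using eq2 by (simp add: inner_commute)
    ultimately show ?thesis by linarith
  qed
  have KL0: "KL \<nu> T \<mu>0 \<theta>h = ereal (?A \<theta>h - m)"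
  proof -
    have "KL \<nu> T \<mu>0 \<theta>h = ereal (- (\<mu>0 \<bullet> \<theta>h)) + ereal (\<mu>0 \<bullet> \<theta>s - ?A \<theta>s) + ereal (?A \<theta>h)"
      by (simp add: KL_def E.fenchel_at[OF ths d0])
    also have "\<dots> = ereal (- (\<mu>0 \<bullet> \<theta>h) + (\<mu>0 \<bullet> \<theta>s - ?A \<theta>s) + ?A \<theta>h)" by simp
    also have "- (\<mu>0 \<bullet> \<theta>h) + (\<mu>0 \<bullet> \<theta>s - ?A \<theta>s) + ?A \<theta>h = ?A \<theta>h - m"
    proof -
      have "(\<theta>h - \<theta>s) \<bullet> \<mu>0 = \<mu>0 \<bullet> \<theta>h - \<mu>0 \<bullet> \<theta>s"
        unfolding inner_diff_left by (simp add: inner_commute)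
      then show ?thesis using val by linarith
    qed
    finally show ?thesis .
  qed
  have KLge: "ereal (?A \<theta>h - m) \<le> KL \<nu> T \<mu> \<theta>h" if mu: "\<mu> \<in> C" for \<mu>
  proof -
    have "?A \<theta>s + (\<theta>h - \<theta>s) \<bullet> \<mu> \<le> m" using Pm mu by blast
    moreover have "(\<theta>h - \<theta>s) \<bullet> \<mu> = \<mu> \<bullet> \<theta>h - \<mu> \<bullet> \<theta>s"
      unfolding inner_diff_left by (simp add: inner_commute)
    ultimately have "?A \<theta>h - m \<le> - (\<mu> \<bullet> \<theta>h) + (\<mu> \<bullet> \<theta>s - ?A \<theta>s) + ?A \<theta>h"
      by linarith
    then have "ereal (?A \<theta>h - m) \<le> ereal (- (\<mu> \<bullet> \<theta>h)) + ereal (\<mu> \<bullet> \<theta>s - ?A \<theta>s) + ereal (?A \<theta>h)"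
      by simp
    also have "\<dots> \<le> ereal (- (\<mu> \<bullet> \<theta>h)) + fenchel_conj \<nu> T \<mu> + ereal (?A \<theta>h)"
      using E.fenchel_lower[OF ths, of \<mu>] by (intro add_mono order_refl)
    finally show ?thesis by (simp add: KL_def)
  qed
  have uniq: "\<mu> = \<mu>0" if mu: "\<mu> \<in> C" and le: "KL \<nu> T \<mu> \<theta>h \<le> KL \<nu> T \<mu>0 \<theta>h" for \<mu>
  proof -
    have maxs: "\<mu> \<bullet> \<theta> - ?A \<theta> \<le> \<mu> \<bullet> \<theta>s - ?A \<theta>s" if th: "\<theta> \<in> ?Th" for \<theta>
    proof -
      have "ereal (- (\<mu> \<bullet> \<theta>h)) + ereal (\<mu> \<bullet> \<theta> - ?A \<theta>) + ereal (?A \<theta>h) \<le> KL \<nu> T \<mu> \<theta>h"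
        unfolding KL_def using E.fenchel_lower[OF th, of \<mu>] by (intro add_mono order_refl)
      also have "\<dots> \<le> ereal (?A \<theta>h - m)" using le KL0 by simp
      finally have "- (\<mu> \<bullet> \<theta>h) + (\<mu> \<bullet> \<theta> - ?A \<theta>) + ?A \<theta>h \<le> ?A \<theta>h - m" by simp
      moreover have "?A \<theta>s + (\<theta>h - \<theta>s) \<bullet> \<mu> \<le> m" using Pm mu by blast
      moreover have "(\<theta>h - \<theta>s) \<bullet> \<mu> = \<mu> \<bullet> \<theta>h - \<mu> \<bullet> \<theta>s"
        unfolding inner_diff_left by (simp add: inner_commute)
      ultimately show ?thesis by linarith
    qed
    define z where "z = \<mu> - \<mu>0"
    have "\<mu> \<bullet> z \<le> \<mu>0 \<bullet> z"
    proof (rule E.dq_lower[OF ths d0 zero_less_one])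
      fix s :: real assume s: "0 < s" "s < 1" "\<theta>s + s *\<^sub>R z \<in> ?Th"
      have "\<mu> \<bullet> (\<theta>s + s *\<^sub>R z) - ?A (\<theta>s + s *\<^sub>R z) \<le> \<mu> \<bullet> \<theta>s - ?A \<theta>s" using maxs s(3) .
      then show "(\<mu> \<bullet> z) * s \<le> ?A (\<theta>s + s *\<^sub>R z) - ?A \<theta>s"
        by (simp add: inner_add_right algebra_simps)
    qed
    then have "z \<bullet> z \<le> 0" by (simp add: z_def inner_diff_left inner_diff_right inner_commute)
    then have "z \<bullet> z = 0" using inner_ge_zero[of z] by linarith
    then have "z = 0" by simp
    then show ?thesis by (simp add: z_def)
  qed
  have S2_0: "S2_opt \<nu> T Mu' \<theta>h \<mu>0"
    unfolding S2_opt_def using mu0C KL0 KLge by (auto simp: C_def)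
  have "\<exists>!\<mu>. S2_opt \<nu> T Mu' \<theta>h \<mu>"
  proof (rule ex1I[of _ \<mu>0])
    show "S2_opt \<nu> T Mu' \<theta>h \<mu>0" by (rule S2_0)
    fix \<mu> assume "S2_opt \<nu> T Mu' \<theta>h \<mu>"
    then have "\<mu> \<in> C" "KL \<nu> T \<mu> \<theta>h \<le> KL \<nu> T \<mu>0 \<theta>h"
      using mu0C by (auto simp: S2_opt_def C_def)
    then show "\<mu> = \<mu>0" by (rule uniq)
  qed
  with part1 show ?thesis by blast
qed


end
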